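(* Write the $\varepsilon$-expansions $$\Delta(x,\varepsilon)=\sum_{n\ge1}\Delta_n(x)\varepsilon^n,\qquad Y(x,\varepsilon)=\sum_{n\ge1}Y_n(x)\varepsilon^n.$$ Then for every $n\ge1$, both $\Delta_n(x)$ and $Y_n(x)$ are polynomials of degree $n$ in the quantities $f^{(l)}(x+k\mu)$, $0\le k\le q-1$, $0\le l\le n-1$. In particular $$\Delta_1(x)=-\overline f(x),\qquad Y_1(x)=-\frac{q+1}{2}\,\overline f(x)+\overline{\overline f}(x),$$ where $$\overline f(x)=\frac1q\sum_{k=0}^{q-1}f(x+k\mu),\qquad \overline{\overline f}(x)=\frac1q\sum_{k=0}^{q-1}(q-k)f(x+k\mu).$$
   Context: Fix integers $p$ and $q\ge1$ and put $\mu=2\pi p/q$. Let $f:\mathbb R\to\mathbb R$ be a $2\pi$-periodic real-analytic function. For real parameters $\varepsilon,\delta$ set $g(x)=-\delta-\varepsilon f(x)$ and consider the map $T_{\varepsilon,\delta}(x,y)=(x+y+\mu+g(x),\;y+g(x))$ on $\mathbb R^2$. Define ${}_nR$ and ${}_nS$ by $T^n_{\varepsilon,\delta}(x_0,y_0)=(x_0+n\mu+{}_nR,\;y_0+{}_nS)$. There exist $\bar{\bar\varepsilon},\eta>0$ and real-analytic functions $\Delta(x,\varepsilon)$ and $Y(x,\varepsilon)$, defined for $x\in\mathbb R$ and $|\varepsilon|<\bar{\bar\varepsilon}$ and vanishing at $\varepsilon=0$, such that $(\delta,y)=(\Delta(x,\varepsilon),Y(x,\varepsilon))$ is the unique solution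 with $|\delta|,|y|<\eta$ of ${}_qR(x,y,\varepsilon,\delta)={}_qS(x,y,\varepsilon,\delta)=0$. *)

theory Defs
  imports "HOL-Analysis.Analysis"
begin

definition real_analytic_on :: "(real \<Rightarrow> real) \<Rightarrow> real set \<Rightarrow> bool" where
  "real_analytic_on F S \<longleftrightarrow>
     (\<forall>x0\<in>S. \<exists>r>0. \<exists>a::nat \<Rightarrow> real.
        \<forall>x. \<bar>x - x0\<bar> < r \<longrightarrow> (\<lambda>n. a n * (x - x0) ^ n) sums F x)"

definition real_analytic2_on :: "(real \<Rightarrow> real \<Rightarrow> real) \<Rightarrow> (real \<times> real) set \<Rightarrow> bool" where
  "real_analytic2_on F S \<longleftrightarrow>
     (\<forall>(x0, e0)\<in>S. \<exists>r>0. \<exists>a::nat \<Rightarrow> nat \<Rightarrow> real.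
        \<forall>x e. \<bar>x - x0\<bar> < r \<longrightarrow> \<bar>e - e0\<bar> < r \<longrightarrow>
          ((\<lambda>(i, j). a i j * (x - x0) ^ i * (e - e0) ^ j) has_sum F x e) UNIV)"

definition stdmap :: "real \<Rightarrow> (real \<Rightarrow> real) \<Rightarrow> real \<Rightarrow> real \<Rightarrow> real \<times> real \<Rightarrow> real \<times> real" where
  "stdmap \<mu> f \<epsilon> \<delta> = (\<lambda>(x, y). let g = - \<delta> - \<epsilon> * f x in (x + y + \<mu> + g, y + g))"

text \<open>T^n(x0,y0) = (x0 + n mu + nR, y0 + nS).\<close>
definition iterR :: "nat \<Rightarrow> real \<Rightarrow> (real \<Rightarrow> real) \<Rightarrow> real \<Rightarrow> real \<Rightarrow> real \<Rightarrow> real \<Rightarrow> real" where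
  "iterR n \<mu> f x0 y0 \<epsilon> \<delta> = fst ((stdmap \<mu> f \<epsilon> \<delta> ^^ n) (x0, y0)) - x0 - real n * \<mu>"

definition iterS :: "nat \<Rightarrow> real \<Rightarrow> (real \<Rightarrow> real) \<Rightarrow> real \<Rightarrow> real \<Rightarrow> real \<Rightarrow> real \<Rightarrow> real" where
  "iterS n \<mu> f x0 y0 \<epsilon> \<delta> = snd ((stdmap \<mu> f \<epsilon> \<delta> ^^ n) (x0, y0)) - y0"

definition admissible ::
  "nat \<Rightarrow> real \<Rightarrow> (real \<Rightarrow> real) \<Rightarrow> real \<Rightarrow> real \<Rightarrow> (real \<Rightarrow> real \<Rightarrow> real) \<Rightarrow> (real \<Rightarrow> real \<Rightarrow> real) \<Rightarrow> bool" where
  "admissible q \<mu> f eb eta Delta Y \<longleftrightarrow>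
     (\<forall>x. f (x + 2 * pi) = f x) \<and> real_analytic_on f UNIV \<and>
     eb > 0 \<and> eta > 0 \<and>
     real_analytic2_on Delta (UNIV \<times> {-eb<..<eb}) \<and>
     real_analytic2_on Y (UNIV \<times> {-eb<..<eb}) \<and>
     (\<forall>x. Delta x 0 = 0 \<and> Y x 0 = 0) \<and>
     (\<forall>x \<epsilon>. \<bar>\<epsilon>\<bar> < eb \<longrightarrow>
        \<bar>Delta x \<epsilon>\<bar> < eta \<and> \<bar>Y x \<epsilon>\<bar> < eta \<and>
        (\<forall>\<delta> y. \<bar>\<delta>\<bar> < eta \<longrightarrow> \<bar>y\<bar> < eta \<longrightarrow>
           ((iterR q \<mu> f x y \<epsilon> \<delta> = 0 \<and> iterS q \<mu> f x y \<epsilon> \<delta> = 0) \<longleftrightarrow>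
            (\<delta> = Delta x \<epsilon> \<and> y = Y x \<epsilon>))))"

definition eps_expansion :: "(real \<Rightarrow> real \<Rightarrow> real) \<Rightarrow> (nat \<Rightarrow> real \<Rightarrow> real) \<Rightarrow> bool" where
  "eps_expansion F D \<longleftrightarrow>
     (\<forall>x. \<exists>r>0. \<forall>\<epsilon>. \<bar>\<epsilon>\<bar> < r \<longrightarrow> (\<lambda>n. D n x * \<epsilon> ^ n) sums F x \<epsilon>)"

text \<open>Value of the polynomial with monomial set M (exponent vectors indexed by (k,l))
  and coefficients c, evaluated at the quantities f^(l)(x + k mu), 0 <= k < q, 0 <= l < m.\<close>
definition deriv_poly_val ::
  "nat \<Rightarrow> nat \<Rightarrow> (nat \<times> nat \<Rightarrow> nat) set \<Rightarrow> ((nat \<times> nat \<Rightarrow> nat) \<Rightarrow> real) \<Rightarrow>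
   real \<Rightarrow> (real \<Rightarrow> real) \<Rightarrow> real \<Rightarrow> real" where
  "deriv_poly_val q m M c \<mu> f x =
     (\<Sum>\<alpha>\<in>M. c \<alpha> * (\<Prod>(k, l)\<in>{0..<q} \<times> {0..<m}. ((deriv ^^ l) f (x + real k * \<mu>)) ^ \<alpha> (k, l)))"

definition poly_deg_le :: "nat \<Rightarrow> nat \<Rightarrow> (nat \<times> nat \<Rightarrow> nat) set \<Rightarrow> nat \<Rightarrow> bool" where
  "poly_deg_le q m M n \<longleftrightarrow> finite M \<and> (\<forall>\<alpha>\<in>M. (\<Sum>kl\<in>{0..<q} \<times> {0..<m}. \<alpha> kl) \<le> n)"

definition fbar :: "nat \<Rightarrow> real \<Rightarrow> (real \<Rightarrow> real) \<Rightarrow> real \<Rightarrow> real" where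
  "fbar q \<mu> f x = (1 / real q) * (\<Sum>k<q. f (x + real k * \<mu>))"

definition fbarbar :: "nat \<Rightarrow> real \<Rightarrow> (real \<Rightarrow> real) \<Rightarrow> real \<Rightarrow> real" where
  "fbarbar q \<mu> f x = (1 / real q) * (\<Sum>k<q. (real q - real k) * f (x + real k * \<mu>))"

end

theory Submission
  imports Defs "HOL-Complex_Analysis.Laurent_Convergence"
begin


theorem fps_nth_conv_deriv_real:
  fixes f :: "real fps"
  assumes "fps_conv_radius f > 0"
  shows   "fps_nth f n = (deriv ^^ n) (eval_fps f) 0 / fact n"
  using assms
proof (induction n arbitrary: f)
  case 0
  thus ?case by (simp add: eval_fps_def)
next
  case (Suc n f)
  have "(deriv ^^ Suc n) (eval_fps f) 0 = (deriv ^^ n) (deriv (eval_fps f)) 0"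
    unfolding funpow_Suc_right o_def ..
  also have "eventually (\<lambda>z::real. z \<in> eball 0 (fps_conv_radius f)) (nhds 0)"
    using Suc.prems by (intro eventually_nhds_in_open) (auto simp: zero_ereal_def)
  hence "eventually (\<lambda>z. deriv (eval_fps f) z = eval_fps (fps_deriv f) z) (nhds 0)"
    by eventually_elim (simp add: eval_fps_deriv)
  hence "(deriv ^^ n) (deriv (eval_fps f)) 0 = (deriv ^^ n) (eval_fps (fps_deriv f)) 0"
    by (intro higher_deriv_cong_ev refl)
  also have "\<dots> / fact n = fps_nth (fps_deriv f) n"
    using Suc.prems fps_conv_radius_deriv[of f] 
    by (intro Suc.IH [symmetric]) auto
  also have "\<dots> / of_nat (Suc n) = fps_nth f (Suc n)"
    by (simp add: fps_deriv_def del: of_nat_Suc)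
  finally show ?case by (simp add: field_split_simps)
qed

lemma fps_nth_fps_expansion_real:
  fixes f :: "real \<Rightarrow> real"
  assumes "f has_fps_expansion F"
  shows   "fps_nth F n = (deriv ^^ n) f 0 / fact n"
proof -
  have "fps_nth F n = (deriv ^^ n) (eval_fps F) 0 / fact n"
    using assms by (intro fps_nth_conv_deriv_real) (auto simp: has_fps_expansion_def)
  also have "(deriv ^^ n) (eval_fps F) 0 = (deriv ^^ n) f 0"
    using assms by (intro higher_deriv_cong_ev) (auto simp: has_fps_expansion_def)
  finally show ?thesis .
qed

lemma has_fps_expansion_unique_real:
  fixes f :: "real \<Rightarrow> real"
  assumes "f has_fps_expansion F" "f has_fps_expansion G"
  shows "F = G"
  by (rule fps_ext) (simp add: fps_nth_fps_expansion_real[OF assms(1)] fps_nth_fps_expansion_real[OF assms(2)])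

lemma has_fps_expansion_at0_real:
  fixes f :: "real \<Rightarrow> real"
  assumes "f has_fps_expansion F"
  shows "f 0 = fps_nth F 0"
proof -
  have "eventually (\<lambda>z. eval_fps F z = f z) (nhds 0)" using assms by (simp add: has_fps_expansion_def)
  hence "eval_fps F 0 = f 0" by (rule eventually_nhds_x_imp_x)
  thus ?thesis by (simp add: eval_fps_at_0)
qed

definition cfps :: "real fps \<Rightarrow> complex fps" where
  "cfps H = Abs_fps (\<lambda>n. complex_of_real (fps_nth H n))"

lemma cfps_nth[simp]: "fps_nth (cfps H) n = complex_of_real (fps_nth H n)"
  by (simp add: cfps_def)

lemma cfps_add: "cfps (H + K) = cfps H + cfps K"
  by (rule fps_ext) simp

lemma cfps_mult: "cfps (H * K) = cfps H * cfps K"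
  by (rule fps_ext) (simp add: fps_mult_nth)

lemma cfps_one: "cfps 1 = 1"
  by (rule fps_ext) simp

lemma cfps_power: "cfps (H ^ i) = cfps H ^ i"
  by (induction i) (simp_all add: cfps_one cfps_mult)

lemma cfps_compose: "cfps (H oo K) = cfps H oo cfps K"
  by (rule fps_ext) (simp add: fps_compose_nth cfps_power[symmetric])

lemma cfps_radius: "fps_conv_radius (cfps H) = fps_conv_radius H"
  unfolding fps_conv_radius_def by (rule conv_radius_cong) simp

lemma eval_cfps:
  assumes "ereal \<bar>t\<bar> < fps_conv_radius H"
  shows "eval_fps (cfps H) (complex_of_real t) = complex_of_real (eval_fps H t)"
proof -
  have "summable (\<lambda>n. fps_nth H n * t ^ n)"
    using assms by (intro summable_in_conv_radius) (simp add: fps_conv_radius_def)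
  hence "(\<lambda>n. fps_nth H n * t ^ n) sums eval_fps H t" by (simp add: eval_fps_def summable_sums)
  hence "(\<lambda>n. complex_of_real (fps_nth H n * t ^ n)) sums complex_of_real (eval_fps H t)"
    by (subst sums_of_real_iff)
  thus ?thesis by (simp add: eval_fps_def sums_iff)
qed


lemma ev_real_of_complex:
  assumes "eventually P (nhds (0::complex))"
  shows "eventually (\<lambda>t::real. P (complex_of_real t)) (nhds 0)"
proof -
  have "filterlim (\<lambda>t::real. complex_of_real t) (nhds 0) (nhds 0)"
    using tendsto_of_real[OF filterlim_ident[of "nhds (0::real)"], where 'a=complex] by simp
  thus ?thesis using assms eventually_compose_filterlim by blast
qed


lemma ev_radius:
  assumes "fps_conv_radius (F::real fps) > 0"
  shows "eventually (\<lambda>t::real. ereal \<bar>t\<bar> < fps_conv_radius F) (nhds 0)"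
proof -
  have "eventually (\<lambda>t::real. t \<in> eball 0 (fps_conv_radius F)) (nhds 0)"
    using assms by (intro eventually_nhds_in_open) (auto simp: zero_ereal_def)
  thus ?thesis by eventually_elim (simp add: dist_real_def)
qed

lemma has_fps_expansion_compose_real:
  fixes f g :: "real \<Rightarrow> real"
  assumes F: "f has_fps_expansion F" and G: "g has_fps_expansion G" "fps_nth G 0 = 0"
  shows "(\<lambda>t. f (g t)) has_fps_expansion (F oo G)"
proof -
  define fc where "fc = eval_fps (cfps F)"
  define gc where "gc = eval_fps (cfps G)"
  have rF: "fps_conv_radius F > 0" "eventually (\<lambda>z. eval_fps F z = f z) (nhds 0)"
    using F by (auto simp: has_fps_expansion_def)
  have rG: "fps_conv_radius G > 0" "eventually (\<lambda>z. eval_fps G z = g z) (nhds 0)"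
    using G by (auto simp: has_fps_expansion_def)
  have "fc has_fps_expansion cfps F" unfolding fc_def
    by (rule eval_fps_has_fps_expansion) (simp add: cfps_radius rF)
  moreover have "gc has_fps_expansion cfps G" unfolding gc_def
    by (rule eval_fps_has_fps_expansion) (simp add: cfps_radius rG)
  ultimately have "(fc \<circ> gc) has_fps_expansion (cfps F oo cfps G)"
    by (rule has_fps_expansion_compose) (use G in simp)
  hence H: "(fc \<circ> gc) has_fps_expansion cfps (F oo G)" by (simp add: cfps_compose)
  hence rad: "fps_conv_radius (F oo G) > 0" by (simp add: has_fps_expansion_def cfps_radius)
  have ev1: "eventually (\<lambda>t::real. eval_fps (cfps (F oo G)) (of_real t) = fc (gc (of_real t))) (nhds 0)"
    using H by (intro ev_real_of_complex) (auto simp: has_fps_expansion_def)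
  have ev2: "eventually (\<lambda>t::real. ereal \<bar>t\<bar> < fps_conv_radius (F oo G)) (nhds 0)"
    by (rule ev_radius[OF rad])
  have ev3: "eventually (\<lambda>t::real. ereal \<bar>t\<bar> < fps_conv_radius G) (nhds 0)"
    by (rule ev_radius[OF rG(1)])
  have g0: "g 0 = 0" using has_fps_expansion_at0_real[OF G(1)] G(2) by simp
  have "continuous (at 0) g" using has_fps_expansion_imp_continuous[OF G(1)] by simp
  hence "(g \<longlongrightarrow> g 0) (at 0)" by (simp add: isCont_def)
  hence gl: "filterlim g (nhds 0) (nhds 0)" using g0 by (simp add: tendsto_nhds_iff)
  have "eventually (\<lambda>s. ereal \<bar>s\<bar> < fps_conv_radius F \<and> eval_fps F s = f s) (nhds 0)"
    using ev_radius[OF rF(1)] rF(2) by eventually_elim auto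
  hence ev5: "eventually (\<lambda>t. ereal \<bar>g t\<bar> < fps_conv_radius F \<and> eval_fps F (g t) = f (g t)) (nhds 0)"
    using gl eventually_compose_filterlim by blast
  have "eventually (\<lambda>t. eval_fps (F oo G) t = f (g t)) (nhds 0)"
    using ev1 ev2 ev3 rG(2) ev5
  proof eventually_elim
    case (elim t)
    have "complex_of_real (eval_fps (F oo G) t) = eval_fps (cfps (F oo G)) (of_real t)"
      using elim by (simp add: eval_cfps)
    also have "\<dots> = fc (gc (of_real t))" using elim by simp
    also have "gc (of_real t) = of_real (g t)" unfolding gc_def using elim by (simp add: eval_cfps)
    also have "fc (of_real (g t)) = of_real (f (g t))" unfolding fc_def using elim by (simp add: eval_cfps)
    finally show ?case by simp
  qed
  thus ?thesis using rad by (simp add: has_fps_expansion_def)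
qed


lemma deriv_shift_real: "deriv (\<lambda>s. h (s + z)) x = deriv h (x + z)" for h :: "real \<Rightarrow> real"
  unfolding deriv_def using DERIV_shift[of h _ x z] by simp

lemma higher_deriv_shift_real:
  "(deriv ^^ n) (\<lambda>s. f (s + z)) = (\<lambda>s. (deriv ^^ n) f (s + z))" for f :: "real \<Rightarrow> real"
proof (induction n)
  case 0 thus ?case by simp
next
  case (Suc n)
  show ?case by (simp add: Suc deriv_shift_real)
qed

lemma taylor_fps:
  assumes "real_analytic_on f UNIV"
  shows "(\<lambda>s. f (x0 + s)) has_fps_expansion Abs_fps (\<lambda>l. (deriv ^^ l) f x0 / fact l)"
proof -
  obtain r a where r: "r > 0" "\<forall>x. \<bar>x - x0\<bar> < r \<longrightarrow> (\<lambda>n. a n * (x - x0) ^ n) sums f x"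
    using assms unfolding real_analytic_on_def by blast
  have "(\<lambda>n. a n * (x0 + r/2 - x0) ^ n) sums f (x0 + r/2)" using r(1) r(2)[rule_format, of "x0 + r/2"] by simp
  hence "summable (\<lambda>n. a n * (r/2) ^ n)" by (simp add: sums_iff)
  hence "conv_radius a \<ge> norm (r/2)" by (rule conv_radius_geI)
  hence rad: "fps_conv_radius (Abs_fps a) > 0" using r(1)
    by (simp add: fps_conv_radius_def) (metis ereal_less(2) half_gt_zero order_less_le_trans)
  have "eventually (\<lambda>s::real. dist s 0 < r) (nhds 0)"
    using r(1) eventually_nhds_metric by blast
  hence "eventually (\<lambda>s. eval_fps (Abs_fps a) s = f (x0 + s)) (nhds 0)"
  proof eventually_elim
    case (elim s)
    hence "(\<lambda>n. a n * (x0 + s - x0) ^ n) sums f (x0 + s)" using r(2)[rule_format, of "x0 + s"] by (simp add: dist_real_def)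
    thus ?case by (simp add: eval_fps_def sums_iff)
  qed
  hence H: "(\<lambda>s. f (x0 + s)) has_fps_expansion Abs_fps a"
    using rad by (simp add: has_fps_expansion_def)
  have "a n = (deriv ^^ n) f x0 / fact n" for n
  proof -
    have "a n = (deriv ^^ n) (\<lambda>s. f (x0 + s)) 0 / fact n"
      using fps_nth_fps_expansion_real[OF H, of n] by simp
    also have "(\<lambda>s. f (x0 + s)) = (\<lambda>s. f (s + x0))" by (simp add: add.commute)
    finally show ?thesis by (simp add: higher_deriv_shift_real)
  qed
  hence "a = (\<lambda>l. (deriv ^^ l) f x0 / fact l)" by (intro ext)
  hence "Abs_fps a = Abs_fps (\<lambda>l. (deriv ^^ l) f x0 / fact l)" by simp
  thus ?thesis using H by simp
qed

lemma eps_fps: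
  assumes "eps_expansion Delta D"
  shows "Delta x has_fps_expansion Abs_fps (\<lambda>n. D n x)"
proof -
  obtain r where r: "r > 0" "\<forall>e. \<bar>e\<bar> < r \<longrightarrow> (\<lambda>n. D n x * e ^ n) sums Delta x e"
    using assms unfolding eps_expansion_def by blast
  have "(\<lambda>n. D n x * (r/2) ^ n) sums Delta x (r/2)" using r by auto
  hence "summable (\<lambda>n. D n x * (r/2) ^ n)" by (simp add: sums_iff)
  hence "conv_radius (\<lambda>n. D n x) \<ge> norm (r/2)" by (rule conv_radius_geI)
  hence rad: "fps_conv_radius (Abs_fps (\<lambda>n. D n x)) > 0" using r(1)
    by (simp add: fps_conv_radius_def) (metis ereal_less(2) half_gt_zero order_less_le_trans)
  have "eventually (\<lambda>s::real. dist s 0 < r) (nhds 0)"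
    using r(1) eventually_nhds_metric by blast
  hence "eventually (\<lambda>s. eval_fps (Abs_fps (\<lambda>n. D n x)) s = Delta x s) (nhds 0)"
  proof eventually_elim
    case (elim s)
    hence "(\<lambda>n. D n x * s ^ n) sums Delta x s" using r by (auto simp: dist_real_def)
    thus ?case by (simp add: eval_fps_def sums_iff)
  qed
  thus ?thesis using rad by (simp add: has_fps_expansion_def)
qed


definition Fser :: "real \<Rightarrow> (real \<Rightarrow> real) \<Rightarrow> real \<Rightarrow> nat \<Rightarrow> real fps" where
  "Fser \<mu> f x k = Abs_fps (\<lambda>l. (deriv ^^ l) f (x + real k * \<mu>) / fact l)"

fun orbF :: "real \<Rightarrow> (real \<Rightarrow> real) \<Rightarrow> real \<Rightarrow> real fps \<Rightarrow> real fps \<Rightarrow> nat \<Rightarrow> real fps \<times> real fps" where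
  "orbF \<mu> f x A B 0 = (B, 0)"
| "orbF \<mu> f x A B (Suc j) = (let Yj = fst (orbF \<mu> f x A B j); Uj = snd (orbF \<mu> f x A B j);
     Yn = Yj - A - fps_X * (Fser \<mu> f x j oo Uj) in (Yn, Uj + Yn))"

lemma stdmap_simp:
  "stdmap \<mu> f e d p = (fst p + snd p + \<mu> - d - e * f (fst p), snd p - d - e * f (fst p))"
  by (cases p) (simp add: stdmap_def Let_def)

definition orb :: "real \<Rightarrow> (real \<Rightarrow> real) \<Rightarrow> (real \<Rightarrow> real \<Rightarrow> real) \<Rightarrow> (real \<Rightarrow> real \<Rightarrow> real) \<Rightarrow> real \<Rightarrow> nat \<Rightarrow> real \<Rightarrow> real \<times> real" where
  "orb \<mu> f Delta Y x j t = (stdmap \<mu> f t (Delta x t) ^^ j) (x, Y x t)"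

lemma orb_Suc:
  "orb \<mu> f Delta Y x (Suc j) t =
     (fst (orb \<mu> f Delta Y x j t) + snd (orb \<mu> f Delta Y x j t) + \<mu> - Delta x t - t * f (fst (orb \<mu> f Delta Y x j t)),
      snd (orb \<mu> f Delta Y x j t) - Delta x t - t * f (fst (orb \<mu> f Delta Y x j t)))"
  by (simp add: orb_def stdmap_simp)

lemma orbit_fps:
  assumes f: "real_analytic_on f UNIV"
    and A: "Delta x has_fps_expansion A" and B: "Y x has_fps_expansion B"
    and A0: "fps_nth A 0 = 0" and B0: "fps_nth B 0 = 0"
  shows "(\<lambda>t. snd (orb \<mu> f Delta Y x j t)) has_fps_expansion fst (orbF \<mu> f x A B j) \<and>
         (\<lambda>t. fst (orb \<mu> f Delta Y x j t) - x - real j * \<mu>) has_fps_expansion snd (orbF \<mu> f x A B j) \<and>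
         fps_nth (fst (orbF \<mu> f x A B j)) 0 = 0 \<and> fps_nth (snd (orbF \<mu> f x A B j)) 0 = 0"
proof (induction j)
  case 0
  have "(\<lambda>t. snd (orb \<mu> f Delta Y x 0 t)) = Y x" by (simp add: orb_def fun_eq_iff)
  moreover have "(\<lambda>t. fst (orb \<mu> f Delta Y x 0 t) - x - real 0 * \<mu>) = (\<lambda>_. 0)" by (simp add: orb_def fun_eq_iff)
  ultimately show ?case using B B0 by simp
next
  case (Suc j)
  define Yj where "Yj = (\<lambda>t. snd (orb \<mu> f Delta Y x j t))"
  define Uj where "Uj = (\<lambda>t. fst (orb \<mu> f Delta Y x j t) - x - real j * \<mu>)"
  define YF where "YF = fst (orbF \<mu> f x A B j)"
  define UF where "UF = snd (orbF \<mu> f x A B j)"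
  have IH: "Yj has_fps_expansion YF" "Uj has_fps_expansion UF" "fps_nth YF 0 = 0" "fps_nth UF 0 = 0"
    using Suc unfolding Yj_def Uj_def YF_def UF_def by auto
  have T: "(\<lambda>s. f ((x + real j * \<mu>) + s)) has_fps_expansion Fser \<mu> f x j"
    unfolding Fser_def by (rule taylor_fps[OF f])
  have C: "(\<lambda>t. f ((x + real j * \<mu>) + Uj t)) has_fps_expansion (Fser \<mu> f x j oo UF)"
    by (rule has_fps_expansion_compose_real[OF T IH(2) IH(4)])
  have C2: "(\<lambda>t. t * f ((x + real j * \<mu>) + Uj t)) has_fps_expansion fps_X * (Fser \<mu> f x j oo UF)"
    by (rule has_fps_expansion_mult[OF has_fps_expansion_fps_X C])
  have Yn: "(\<lambda>t. Yj t - Delta x t - t * f ((x + real j * \<mu>) + Uj t)) has_fps_expansion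
      YF - A - fps_X * (Fser \<mu> f x j oo UF)"
    by (intro has_fps_expansion_diff IH A C2)
  have Un: "(\<lambda>t. Uj t + (Yj t - Delta x t - t * f ((x + real j * \<mu>) + Uj t))) has_fps_expansion
      UF + (YF - A - fps_X * (Fser \<mu> f x j oo UF))"
    by (intro has_fps_expansion_add IH Yn)
  have e1: "(\<lambda>t. snd (orb \<mu> f Delta Y x (Suc j) t)) = (\<lambda>t. Yj t - Delta x t - t * f ((x + real j * \<mu>) + Uj t))"
    by (simp add: orb_Suc Yj_def Uj_def fun_eq_iff)
  have e2: "(\<lambda>t. fst (orb \<mu> f Delta Y x (Suc j) t) - x - real (Suc j) * \<mu>) =
     (\<lambda>t. Uj t + (Yj t - Delta x t - t * f ((x + real j * \<mu>) + Uj t)))"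
    by (simp add: orb_Suc Yj_def Uj_def fun_eq_iff algebra_simps)
  have o: "orbF \<mu> f x A B (Suc j) = (YF - A - fps_X * (Fser \<mu> f x j oo UF), UF + (YF - A - fps_X * (Fser \<mu> f x j oo UF)))"
    by (simp add: YF_def UF_def Let_def)
  show ?case unfolding o e1 e2 using Yn Un IH A0 by simp
qed


lemma key_eqs:
  fixes x :: real
  assumes adm: "admissible q \<mu> f eb eta Delta Y" and eD: "eps_expansion Delta D" and eY: "eps_expansion Y Yc"
  defines "A \<equiv> Abs_fps (\<lambda>n. D n x)" and "B \<equiv> Abs_fps (\<lambda>n. Yc n x)"
  shows "fps_nth A 0 = 0" "fps_nth B 0 = 0" "fst (orbF \<mu> f x A B q) = B" "snd (orbF \<mu> f x A B q) = 0"
proof -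
  have fa: "real_analytic_on f UNIV" and eb: "eb > 0" and z: "Delta x 0 = 0" "Y x 0 = 0"
    using adm unfolding admissible_def by auto
  have HA: "Delta x has_fps_expansion A" unfolding A_def by (rule eps_fps[OF eD])
  have HB: "Y x has_fps_expansion B" unfolding B_def by (rule eps_fps[OF eY])
  show A0: "fps_nth A 0 = 0" using has_fps_expansion_at0_real[OF HA] z by simp
  show B0: "fps_nth B 0 = 0" using has_fps_expansion_at0_real[OF HB] z by simp
  note O = orbit_fps[of f Delta x A Y B \<mu> q, OF fa HA HB A0 B0]
  have ev: "eventually (\<lambda>t::real. dist t 0 < eb) (nhds 0)"
    using eb eventually_nhds_metric by blast
  have sol: "iterR q \<mu> f x (Y x t) t (Delta x t) = 0 \<and> iterS q \<mu> f x (Y x t) t (Delta x t) = 0"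
    if "\<bar>t\<bar> < eb" for t
    using adm that unfolding admissible_def by blast
  have ev2: "eventually (\<lambda>t. fst (orb \<mu> f Delta Y x q t) - x - real q * \<mu> = 0 \<and>
       snd (orb \<mu> f Delta Y x q t) - Y x t = 0) (nhds 0)"
    using ev
  proof eventually_elim
    case (elim t)
    thus ?case using sol[of t] by (simp add: iterR_def iterS_def orb_def dist_real_def)
  qed
  have "(\<lambda>t. fst (orb \<mu> f Delta Y x q t) - x - real q * \<mu>) has_fps_expansion 0"
    by (subst has_fps_expansion_cong[of _ "\<lambda>_. 0" 0 0]) (use ev2 in \<open>auto elim: eventually_mono\<close>)
  thus "snd (orbF \<mu> f x A B q) = 0" using O has_fps_expansion_unique_real by blast
  have "(\<lambda>t. snd (orb \<mu> f Delta Y x q t) - Y x t) has_fps_expansion fst (orbF \<mu> f x A B q) - B"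
    using O HB by (intro has_fps_expansion_diff) auto
  moreover have "(\<lambda>t. snd (orb \<mu> f Delta Y x q t) - Y x t) has_fps_expansion 0"
    by (subst has_fps_expansion_cong[of _ "\<lambda>_. 0" 0 0]) (use ev2 in \<open>auto elim: eventually_mono\<close>)
  ultimately show "fst (orbF \<mu> f x A B q) = B" using has_fps_expansion_unique_real by fastforce
qed


definition Gser :: "real \<Rightarrow> (real \<Rightarrow> real) \<Rightarrow> real \<Rightarrow> real fps \<Rightarrow> real fps \<Rightarrow> nat \<Rightarrow> real fps" where
  "Gser \<mu> f x A B k = Fser \<mu> f x k oo snd (orbF \<mu> f x A B k)"

lemma orbF_closed:
  "fps_nth (fst (orbF \<mu> f x A B j)) n = fps_nth B n - real j * fps_nth A n
      - (if n = 0 then 0 else (\<Sum>k<j. fps_nth (Gser \<mu> f x A B k) (n - 1))) \<and>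
   fps_nth (snd (orbF \<mu> f x A B j)) n = real j * fps_nth B n - real j * (real j + 1) / 2 * fps_nth A n
      - (if n = 0 then 0 else (\<Sum>k<j. (real j - real k) * fps_nth (Gser \<mu> f x A B k) (n - 1)))"
proof (induction j)
  case 0 thus ?case by simp
next
  case (Suc j)
  have o: "orbF \<mu> f x A B (Suc j) = (fst (orbF \<mu> f x A B j) - A - fps_X * Gser \<mu> f x A B j,
      snd (orbF \<mu> f x A B j) + (fst (orbF \<mu> f x A B j) - A - fps_X * Gser \<mu> f x A B j))"
    by (simp add: Let_def Gser_def)
  have s: "(\<Sum>k<Suc j. (real (Suc j) - real k) * fps_nth (Gser \<mu> f x A B k) (n - 1)) =
     (\<Sum>k<j. (real j - real k) * fps_nth (Gser \<mu> f x A B k) (n - 1)) + (\<Sum>k<Suc j. fps_nth (Gser \<mu> f x A B k) (n - 1))"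
    by (simp add: sum.distrib[symmetric] algebra_simps)
  show ?case unfolding o using Suc s by (auto simp: algebra_simps add_divide_distrib)
qed



definition mon :: "nat \<Rightarrow> nat \<Rightarrow> (nat \<times> nat \<Rightarrow> nat) \<Rightarrow> (nat \<times> nat \<Rightarrow> real) \<Rightarrow> real" where
  "mon q N \<alpha> v = (\<Prod>kl\<in>{0..<q} \<times> {0..<N}. v kl ^ \<alpha> kl)"

definition pv :: "nat \<Rightarrow> nat \<Rightarrow> (nat \<times> nat \<Rightarrow> nat) set \<Rightarrow> ((nat \<times> nat \<Rightarrow> nat) \<Rightarrow> real) \<Rightarrow> (nat \<times> nat \<Rightarrow> real) \<Rightarrow> real" where
  "pv q N M c v = (\<Sum>\<alpha>\<in>M. c \<alpha> * mon q N \<alpha> v)"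

definition isp :: "nat \<Rightarrow> nat \<Rightarrow> nat \<Rightarrow> ((nat \<times> nat \<Rightarrow> real) \<Rightarrow> real) \<Rightarrow> bool" where
  "isp q N d P \<longleftrightarrow> (\<exists>M c. poly_deg_le q N M d \<and> (\<forall>v. P v = pv q N M c v))"

lemma isp_const: "isp q N d (\<lambda>v. c)"
proof -
  have "poly_deg_le q N {\<lambda>_. 0} d" by (simp add: poly_deg_le_def)
  moreover have "\<forall>v. c = pv q N {\<lambda>_. 0} (\<lambda>_. c) v" by (simp add: pv_def mon_def)
  ultimately show ?thesis unfolding isp_def by blast
qed

lemma isp_var:
  assumes "k < q" "l < N" "1 \<le> d"
  shows "isp q N d (\<lambda>v. v (k, l))"
proof -
  define a where "a = (\<lambda>kl. if kl = (k, l) then 1 else (0::nat))"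
  have box: "(k, l) \<in> {0..<q} \<times> {0..<N}" using assms by auto
  have "(\<Sum>kl\<in>{0..<q} \<times> {0..<N}. a kl) = 1" unfolding a_def using box by (simp add: sum.delta)
  hence "poly_deg_le q N {a} d" using assms by (simp add: poly_deg_le_def)
  moreover have "v (k, l) = pv q N {a} (\<lambda>_. 1) v" for v
  proof -
    have "mon q N a v = (\<Prod>kl\<in>{0..<q} \<times> {0..<N}. if kl = (k, l) then v kl else 1)"
      unfolding mon_def a_def by (rule prod.cong) auto
    also have "\<dots> = v (k, l)" using box by (simp add: prod.delta)
    finally show ?thesis by (simp add: pv_def)
  qed
  ultimately show ?thesis unfolding isp_def by blast
qed

lemma isp_mono: "isp q N d P \<Longrightarrow> d \<le> d' \<Longrightarrow> isp q N d' P"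
  unfolding isp_def poly_deg_le_def by (meson order_trans)

lemma isp_add:
  assumes "isp q N d P" "isp q N d Q"
  shows "isp q N d (\<lambda>v. P v + Q v)"
proof -
  obtain M1 c1 where 1: "poly_deg_le q N M1 d" "\<forall>v. P v = pv q N M1 c1 v" using assms(1) isp_def by blast
  obtain M2 c2 where 2: "poly_deg_le q N M2 d" "\<forall>v. Q v = pv q N M2 c2 v" using assms(2) isp_def by blast
  define c where "c = (\<lambda>a. (if a \<in> M1 then c1 a else 0) + (if a \<in> M2 then c2 a else 0))"
  have fin: "finite M1" "finite M2" using 1 2 by (auto simp: poly_deg_le_def)
  have "poly_deg_le q N (M1 \<union> M2) d" using 1 2 by (auto simp: poly_deg_le_def)
  moreover have "P v + Q v = pv q N (M1 \<union> M2) c v" for v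
  proof -
    have "pv q N (M1 \<union> M2) c v = (\<Sum>a\<in>M1 \<union> M2. (if a \<in> M1 then c1 a * mon q N a v else 0))
        + (\<Sum>a\<in>M1 \<union> M2. (if a \<in> M2 then c2 a * mon q N a v else 0))"
      unfolding pv_def c_def sum.distrib[symmetric] by (rule sum.cong) (auto simp: algebra_simps)
    also have "\<dots> = (\<Sum>a\<in>M1. c1 a * mon q N a v) + (\<Sum>a\<in>M2. c2 a * mon q N a v)"
      using fin by (simp add: sum.If_cases Int_absorb1 Int_absorb2)
    finally show ?thesis using 1 2 by (simp add: pv_def)
  qed
  ultimately show ?thesis unfolding isp_def by blast
qed


lemma mon_add: "mon q N (\<lambda>kl. a kl + b kl) v = mon q N a v * mon q N b v"
  unfolding mon_def by (simp add: power_add prod.distrib)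

lemma isp_mult:
  assumes "isp q N d1 P" "isp q N d2 Q"
  shows "isp q N (d1 + d2) (\<lambda>v. P v * Q v)"
proof -
  obtain M1 c1 where 1: "poly_deg_le q N M1 d1" "\<forall>v. P v = pv q N M1 c1 v" using assms(1) isp_def by blast
  obtain M2 c2 where 2: "poly_deg_le q N M2 d2" "\<forall>v. Q v = pv q N M2 c2 v" using assms(2) isp_def by blast
  have fin: "finite M1" "finite M2" using 1 2 by (auto simp: poly_deg_le_def)
  define pl where "pl = (\<lambda>p::(nat \<times> nat \<Rightarrow> nat) \<times> (nat \<times> nat \<Rightarrow> nat). (\<lambda>kl. fst p kl + snd p kl))"
  define M where "M = pl ` (M1 \<times> M2)"
  define c where "c = (\<lambda>g. \<Sum>p\<in>{p \<in> M1 \<times> M2. pl p = g}. c1 (fst p) * c2 (snd p))"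
  have "poly_deg_le q N M (d1 + d2)"
    unfolding poly_deg_le_def
  proof
    show "finite M" using fin by (simp add: M_def)
    show "\<forall>g\<in>M. (\<Sum>kl\<in>{0..<q} \<times> {0..<N}. g kl) \<le> d1 + d2"
    proof
      fix g assume "g \<in> M"
      then obtain a b where ab: "a \<in> M1" "b \<in> M2" "g = pl (a, b)" by (auto simp: M_def)
      have "(\<Sum>kl\<in>{0..<q} \<times> {0..<N}. g kl) = (\<Sum>kl\<in>{0..<q} \<times> {0..<N}. a kl) + (\<Sum>kl\<in>{0..<q} \<times> {0..<N}. b kl)"
        using ab by (simp add: pl_def sum.distrib)
      also have "\<dots> \<le> d1 + d2" using ab 1 2 by (intro add_mono) (auto simp: poly_deg_le_def)
      finally show "(\<Sum>kl\<in>{0..<q} \<times> {0..<N}. g kl) \<le> d1 + d2" .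
    qed
  qed
  moreover have "P v * Q v = pv q N M c v" for v
  proof -
    have "P v * Q v = (\<Sum>a\<in>M1. \<Sum>b\<in>M2. c1 a * mon q N a v * (c2 b * mon q N b v))"
      using 1 2 by (simp add: pv_def sum_product)
    also have "\<dots> = (\<Sum>p\<in>M1 \<times> M2. c1 (fst p) * c2 (snd p) * mon q N (pl p) v)"
      by (simp add: sum.cartesian_product pl_def mon_add case_prod_beta algebra_simps)
    also have "\<dots> = (\<Sum>g\<in>M. \<Sum>p\<in>{p \<in> M1 \<times> M2. pl p = g}. c1 (fst p) * c2 (snd p) * mon q N (pl p) v)"
      unfolding M_def using fin by (intro sum.image_gen) auto
    also have "\<dots> = (\<Sum>g\<in>M. c g * mon q N g v)"
      unfolding c_def sum_distrib_right by (intro sum.cong refl) auto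
    finally show ?thesis by (simp add: pv_def)
  qed
  ultimately show ?thesis unfolding isp_def by blast
qed

lemma isp_sum:
  assumes "finite S" "\<And>i. i \<in> S \<Longrightarrow> isp q N d (P i)"
  shows "isp q N d (\<lambda>v. \<Sum>i\<in>S. P i v)"
  using assms
proof (induction S rule: finite_induct)
  case empty thus ?case using isp_const[of q N d 0] by simp
next
  case (insert x F)
  thus ?case using isp_add[of q N d "P x" "\<lambda>v. \<Sum>i\<in>F. P i v"] by simp
qed

lemma isp_smult: "isp q N d P \<Longrightarrow> isp q N d (\<lambda>v. c * P v)"
  using isp_mult[OF isp_const[of q N 0 c]] by simp

lemma isp_diff: "isp q N d P \<Longrightarrow> isp q N d Q \<Longrightarrow> isp q N d (\<lambda>v. P v - Q v)"
  using isp_add[of q N d P "\<lambda>v. (-1) * Q v"] isp_smult[of q N d Q "-1"] by simp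



type_synonym ctx = "(real \<Rightarrow> real) \<times> (nat \<Rightarrow> real \<Rightarrow> real) \<times> (nat \<Rightarrow> real \<Rightarrow> real) \<times> real"

definition valid :: "nat \<Rightarrow> real \<Rightarrow> ctx \<Rightarrow> bool" where
  "valid q \<mu> c \<longleftrightarrow> (case c of (f, D, Yc, x) \<Rightarrow>
     \<exists>eb eta Delta Y. admissible q \<mu> f eb eta Delta Y \<and> eps_expansion Delta D \<and> eps_expansion Y Yc)"

definition jet :: "real \<Rightarrow> ctx \<Rightarrow> nat \<times> nat \<Rightarrow> real" where
  "jet \<mu> c = (case c of (f, D, Yc, x) \<Rightarrow> (\<lambda>(k, l). (deriv ^^ l) f (x + real k * \<mu>)))"

definition UP :: "nat \<Rightarrow> real \<Rightarrow> nat \<Rightarrow> nat \<Rightarrow> (ctx \<Rightarrow> real) \<Rightarrow> bool" where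
  "UP q \<mu> N d h \<longleftrightarrow> (\<exists>P. isp q N d P \<and> (\<forall>c. valid q \<mu> c \<longrightarrow> h c = P (jet \<mu> c)))"

lemma UP_cong: "UP q \<mu> N d h \<Longrightarrow> (\<And>c. valid q \<mu> c \<Longrightarrow> h c = h' c) \<Longrightarrow> UP q \<mu> N d h'"
  unfolding UP_def by metis

lemma UP_const: "UP q \<mu> N d (\<lambda>c. a)"
  unfolding UP_def using isp_const by fastforce

lemma UP_mono: "UP q \<mu> N d h \<Longrightarrow> d \<le> d' \<Longrightarrow> UP q \<mu> N d' h"
  unfolding UP_def using isp_mono by blast

lemma UP_add: "UP q \<mu> N d h1 \<Longrightarrow> UP q \<mu> N d h2 \<Longrightarrow> UP q \<mu> N d (\<lambda>c. h1 c + h2 c)"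
proof -
  assume "UP q \<mu> N d h1" "UP q \<mu> N d h2"
  then obtain P1 P2 where "isp q N d P1" "\<forall>c. valid q \<mu> c \<longrightarrow> h1 c = P1 (jet \<mu> c)"
     "isp q N d P2" "\<forall>c. valid q \<mu> c \<longrightarrow> h2 c = P2 (jet \<mu> c)" unfolding UP_def by blast
  thus ?thesis unfolding UP_def by (intro exI[of _ "\<lambda>v. P1 v + P2 v"]) (simp add: isp_add)
qed

lemma UP_mult: "UP q \<mu> N d1 h1 \<Longrightarrow> UP q \<mu> N d2 h2 \<Longrightarrow> UP q \<mu> N (d1 + d2) (\<lambda>c. h1 c * h2 c)"
proof -
  assume "UP q \<mu> N d1 h1" "UP q \<mu> N d2 h2"
  then obtain P1 P2 where "isp q N d1 P1" "\<forall>c. valid q \<mu> c \<longrightarrow> h1 c = P1 (jet \<mu> c)"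
     "isp q N d2 P2" "\<forall>c. valid q \<mu> c \<longrightarrow> h2 c = P2 (jet \<mu> c)" unfolding UP_def by blast
  thus ?thesis unfolding UP_def by (intro exI[of _ "\<lambda>v. P1 v * P2 v"]) (simp add: isp_mult)
qed

lemma UP_smult: "UP q \<mu> N d h \<Longrightarrow> UP q \<mu> N d (\<lambda>c. a * h c)"
  using UP_mult[OF UP_const[of q \<mu> N 0 a]] by simp

lemma UP_diff: "UP q \<mu> N d h1 \<Longrightarrow> UP q \<mu> N d h2 \<Longrightarrow> UP q \<mu> N d (\<lambda>c. h1 c - h2 c)"
  using UP_add[of q \<mu> N d h1 "\<lambda>c. (-1) * h2 c"] UP_smult[of q \<mu> N d h2 "-1"] by simp

lemma UP_sum:
  assumes "finite S" "\<And>i. i \<in> S \<Longrightarrow> UP q \<mu> N d (h i)"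
  shows "UP q \<mu> N d (\<lambda>c. \<Sum>i\<in>S. h i c)"
  using assms
proof (induction S rule: finite_induct)
  case empty thus ?case using UP_const[of q \<mu> N d 0] by simp
next
  case (insert x F)
  thus ?case using UP_add[of q \<mu> N d "h x" "\<lambda>c. \<Sum>i\<in>F. h i c"] by simp
qed

lemma UP_Fser:
  assumes "k < q" "i < N"
  shows "UP q \<mu> N 1 (\<lambda>c. case c of (f, D, Yc, x) \<Rightarrow> fps_nth (Fser \<mu> f x k) i)"
proof -
  have "isp q N 1 (\<lambda>v. (1 / fact i) * v (k, i))"
    using assms by (intro isp_smult isp_var) auto
  moreover have "\<forall>c. valid q \<mu> c \<longrightarrow> (case c of (f, D, Yc, x) \<Rightarrow> fps_nth (Fser \<mu> f x k) i) = (1 / fact i) * jet \<mu> c (k, i)"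
    by (auto simp: Fser_def jet_def)
  ultimately show ?thesis unfolding UP_def by blast
qed

lemma UP_power:
  assumes "\<And>s. s \<le> m \<Longrightarrow> UP q \<mu> N s (\<lambda>c. fps_nth (U c) s)"
  shows "s \<le> m \<Longrightarrow> UP q \<mu> N s (\<lambda>c. fps_nth (U c ^ i) s)"
proof (induction i arbitrary: s)
  case 0
  show ?case by (rule UP_cong[OF UP_const[of q \<mu> N s "if s = 0 then 1 else 0"]]) simp
next
  case (Suc i)
  have "UP q \<mu> N s (\<lambda>c. \<Sum>j\<in>{0..s}. fps_nth (U c) j * fps_nth (U c ^ i) (s - j))"
  proof (rule UP_sum)
    fix j assume j: "j \<in> {0..s}"
    have "UP q \<mu> N (j + (s - j)) (\<lambda>c. fps_nth (U c) j * fps_nth (U c ^ i) (s - j))"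
      using j Suc by (intro UP_mult assms Suc.IH) auto
    thus "UP q \<mu> N s (\<lambda>c. fps_nth (U c) j * fps_nth (U c ^ i) (s - j))" using j by simp
  qed simp
  thus ?case by (simp add: fps_mult_nth)
qed


definition URc :: "real \<Rightarrow> ctx \<Rightarrow> nat \<Rightarrow> real fps" where
  "URc \<mu> c k = (case c of (f, D, Yc, x) \<Rightarrow> snd (orbF \<mu> f x (Abs_fps (\<lambda>n. D n x)) (Abs_fps (\<lambda>n. Yc n x)) k))"

definition GCc :: "real \<Rightarrow> ctx \<Rightarrow> nat \<Rightarrow> real fps" where
  "GCc \<mu> c k = (case c of (f, D, Yc, x) \<Rightarrow> Gser \<mu> f x (Abs_fps (\<lambda>n. D n x)) (Abs_fps (\<lambda>n. Yc n x)) k)"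

definition Ac :: "ctx \<Rightarrow> nat \<Rightarrow> real" where "Ac c n = (case c of (f, D, Yc, x) \<Rightarrow> D n x)"
definition Bc :: "ctx \<Rightarrow> nat \<Rightarrow> real" where "Bc c n = (case c of (f, D, Yc, x) \<Rightarrow> Yc n x)"

lemma GC_nth: "fps_nth (GCc \<mu> c k) m =
   (\<Sum>i=0..m. (case c of (f, D, Yc, x) \<Rightarrow> fps_nth (Fser \<mu> f x k) i) * fps_nth (URc \<mu> c k ^ i) m)"
  by (cases c) (simp add: GCc_def URc_def Gser_def fps_compose_nth)

lemma UR_nth: "fps_nth (URc \<mu> c k) n = real k * Bc c n - real k * (real k + 1) / 2 * Ac c n
      - (if n = 0 then 0 else (\<Sum>j<k. (real k - real j) * fps_nth (GCc \<mu> c j) (n - 1)))"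
  by (cases c) (simp add: GCc_def URc_def Ac_def Bc_def orbF_closed)

lemma valid_facts:
  assumes "valid q \<mu> c"
  shows "Ac c 0 = 0" "Bc c 0 = 0"
    "n \<ge> 1 \<Longrightarrow> real q * Ac c n = - (\<Sum>k<q. fps_nth (GCc \<mu> c k) (n - 1))"
    "n \<ge> 1 \<Longrightarrow> real q * Bc c n = real q * (real q + 1) / 2 * Ac c n + (\<Sum>k<q. (real q - real k) * fps_nth (GCc \<mu> c k) (n - 1))"
proof -
  obtain f D Yc x where c: "c = (f, D, Yc, x)" by (cases c) auto
  obtain eb eta Delta Y where adm: "admissible q \<mu> f eb eta Delta Y" "eps_expansion Delta D" "eps_expansion Y Yc"
    using assms by (auto simp: valid_def c)
  note K = key_eqs[OF adm, of x]
  show "Ac c 0 = 0" "Bc c 0 = 0" using K by (simp_all add: c Ac_def Bc_def)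
  have 1: "fps_nth (fst (orbF \<mu> f x (Abs_fps (\<lambda>n. D n x)) (Abs_fps (\<lambda>n. Yc n x)) q)) n = Yc n x"
    using K(3) by simp
  have 2: "fps_nth (snd (orbF \<mu> f x (Abs_fps (\<lambda>n. D n x)) (Abs_fps (\<lambda>n. Yc n x)) q)) n = 0"
    using K(4) by simp
  assume n: "n \<ge> 1"
  from 1 n show "real q * Ac c n = - (\<Sum>k<q. fps_nth (GCc \<mu> c k) (n - 1))"
    by (simp add: orbF_closed c Ac_def GCc_def)
  from 2 n show "real q * Bc c n = real q * (real q + 1) / 2 * Ac c n + (\<Sum>k<q. (real q - real k) * fps_nth (GCc \<mu> c k) (n - 1))"
    by (simp add: orbF_closed c Ac_def Bc_def GCc_def)
qed


lemma main_ind: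
  assumes q: "q \<ge> 1"
  shows "m \<le> N \<Longrightarrow> \<forall>s\<le>m. UP q \<mu> N s (\<lambda>c. Ac c s) \<and> UP q \<mu> N s (\<lambda>c. Bc c s) \<and>
      (\<forall>k\<le>q. UP q \<mu> N s (\<lambda>c. fps_nth (URc \<mu> c k) s))"
proof (induction m)
  case 0
  have a: "UP q \<mu> N 0 (\<lambda>c. Ac c 0)" by (rule UP_cong[OF UP_const[of q \<mu> N 0 0]]) (simp add: valid_facts)
  have b: "UP q \<mu> N 0 (\<lambda>c. Bc c 0)" by (rule UP_cong[OF UP_const[of q \<mu> N 0 0]]) (simp add: valid_facts)
  have u: "UP q \<mu> N 0 (\<lambda>c. fps_nth (URc \<mu> c k) 0)" for k
    by (rule UP_cong[OF UP_const[of q \<mu> N 0 0]]) (simp add: valid_facts UR_nth)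
  show ?case using a b u by auto
next
  case (Suc m)
  hence IH: "\<forall>s\<le>m. UP q \<mu> N s (\<lambda>c. Ac c s) \<and> UP q \<mu> N s (\<lambda>c. Bc c s) \<and>
      (\<forall>k\<le>q. UP q \<mu> N s (\<lambda>c. fps_nth (URc \<mu> c k) s))" by simp
  have G: "UP q \<mu> N (Suc m) (\<lambda>c. fps_nth (GCc \<mu> c k) m)" if k: "k < q" for k
  proof -
    have "UP q \<mu> N (Suc m) (\<lambda>c. \<Sum>i=0..m. (case c of (f, D, Yc, x) \<Rightarrow> fps_nth (Fser \<mu> f x k) i) * fps_nth (URc \<mu> c k ^ i) m)"
    proof (rule UP_sum)
      fix i assume i: "i \<in> {0..m}"
      have P: "UP q \<mu> N m (\<lambda>c. fps_nth (URc \<mu> c k ^ i) m)"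
        by (rule UP_power[of m]) (use IH k in auto)
      show "UP q \<mu> N (Suc m) (\<lambda>c. (case c of (f, D, Yc, x) \<Rightarrow> fps_nth (Fser \<mu> f x k) i) * fps_nth (URc \<mu> c k ^ i) m)"
        using UP_mult[OF UP_Fser[of k q i N \<mu>] P] k i Suc.prems by simp
    qed simp
    thus ?thesis by (simp add: GC_nth)
  qed
  have a: "UP q \<mu> N (Suc m) (\<lambda>c. Ac c (Suc m))"
  proof (rule UP_cong)
    show "UP q \<mu> N (Suc m) (\<lambda>c. (- 1 / real q) * (\<Sum>k<q. fps_nth (GCc \<mu> c k) m))"
      by (intro UP_smult UP_sum G) auto
  next
    fix c assume "valid q \<mu> c"
    from valid_facts(3)[OF this, of "Suc m"] q
    show "(- 1 / real q) * (\<Sum>k<q. fps_nth (GCc \<mu> c k) m) = Ac c (Suc m)"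
      by (simp add: field_simps)
  qed
  have b: "UP q \<mu> N (Suc m) (\<lambda>c. Bc c (Suc m))"
  proof (rule UP_cong)
    show "UP q \<mu> N (Suc m) (\<lambda>c. ((real q + 1) / 2) * Ac c (Suc m) + (1 / real q) * (\<Sum>k<q. (real q - real k) * fps_nth (GCc \<mu> c k) m))"
      by (intro UP_add UP_smult UP_sum G a) auto
  next
    fix c assume "valid q \<mu> c"
    from valid_facts(4)[OF this, of "Suc m"] q
    show "((real q + 1) / 2) * Ac c (Suc m) + (1 / real q) * (\<Sum>k<q. (real q - real k) * fps_nth (GCc \<mu> c k) m) = Bc c (Suc m)"
      by (simp add: field_simps)
  qed
  have u: "UP q \<mu> N (Suc m) (\<lambda>c. fps_nth (URc \<mu> c k) (Suc m))" if k: "k \<le> q" for k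
  proof -
    have "UP q \<mu> N (Suc m) (\<lambda>c. real k * Bc c (Suc m) - real k * (real k + 1) / 2 * Ac c (Suc m)
      - (\<Sum>j<k. (real k - real j) * fps_nth (GCc \<mu> c j) m))"
      using k by (intro UP_diff UP_smult UP_sum G a b) auto
    thus ?thesis by (simp add: UR_nth)
  qed
  show ?case using IH a b u by (auto simp: le_Suc_eq)
qed


lemma pv_jet: "pv q N M cf (jet \<mu> (f, D, Yc, x)) = deriv_poly_val q N M cf \<mu> f x"
  unfolding pv_def mon_def jet_def deriv_poly_val_def
  by (intro sum.cong refl arg_cong2[where f="(*)"] prod.cong) auto

lemma GC0: "fps_nth (GCc \<mu> (f, D, Yc, x) k) 0 = f (x + real k * \<mu>)"
  by (simp add: GC_nth Fser_def)

theorem mainTheorem5: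
  fixes p :: int and q :: nat
  assumes "q \<ge> 1"
  defines "\<mu> \<equiv> 2 * pi * real_of_int p / real q"
  shows "(\<forall>n\<ge>1. \<exists>MD cD MY cY.
            poly_deg_le q n MD n \<and> poly_deg_le q n MY n \<and>
            (\<forall>f eb eta Delta Y D Yc.
               admissible q \<mu> f eb eta Delta Y \<and> eps_expansion Delta D \<and> eps_expansion Y Yc \<longrightarrow>
               (\<forall>x. D n x = deriv_poly_val q n MD cD \<mu> f x \<and>
                    Yc n x = deriv_poly_val q n MY cY \<mu> f x)))
       \<and> (\<forall>f eb eta Delta Y D Yc.
            admissible q \<mu> f eb eta Delta Y \<and> eps_expansion Delta D \<and> eps_expansion Y Yc \<longrightarrow>
            (\<forall>x. D 1 x = - fbar q \<mu> f x \<and>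
                 Yc 1 x = - ((real q + 1) / 2) * fbar q \<mu> f x + fbarbar q \<mu> f x))"
proof (intro conjI allI impI)
  fix n :: nat assume n: "n \<ge> 1"
  have M: "UP q \<mu> n n (\<lambda>c. Ac c n)" "UP q \<mu> n n (\<lambda>c. Bc c n)"
    using main_ind[OF assms(1), of n n \<mu>] by auto
  obtain PD PY where P: "isp q n n PD" "\<forall>c. valid q \<mu> c \<longrightarrow> Ac c n = PD (jet \<mu> c)"
    "isp q n n PY" "\<forall>c. valid q \<mu> c \<longrightarrow> Bc c n = PY (jet \<mu> c)"
    using M unfolding UP_def by blast
  obtain MD cD where D: "poly_deg_le q n MD n" "\<forall>v. PD v = pv q n MD cD v" using P(1) isp_def by blast
  obtain MY cY where Y: "poly_deg_le q n MY n" "\<forall>v. PY v = pv q n MY cY v" using P(3) isp_def by blast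
  show "\<exists>MD cD MY cY.
            poly_deg_le q n MD n \<and> poly_deg_le q n MY n \<and>
            (\<forall>f eb eta Delta Y D Yc.
               admissible q \<mu> f eb eta Delta Y \<and> eps_expansion Delta D \<and> eps_expansion Y Yc \<longrightarrow>
               (\<forall>x. D n x = deriv_poly_val q n MD cD \<mu> f x \<and>
                    Yc n x = deriv_poly_val q n MY cY \<mu> f x))"
  proof (intro exI conjI allI impI)
    fix f eb eta Delta Y D Yc x
    assume "admissible q \<mu> f eb eta Delta Y \<and> eps_expansion Delta D \<and> eps_expansion Y Yc"
    hence v: "valid q \<mu> (f, D, Yc, x)" unfolding valid_def by blast
    show "D n x = deriv_poly_val q n MD cD \<mu> f x"
      using P(2)[rule_format, OF v] D(2) by (simp add: Ac_def pv_jet)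
    show "Yc n x = deriv_poly_val q n MY cY \<mu> f x"
      using P(4)[rule_format, OF v] Y(2) by (simp add: Bc_def pv_jet)
  qed (use D Y in auto)
next
  fix f eb eta Delta Y D Yc x
  assume "admissible q \<mu> f eb eta Delta Y \<and> eps_expansion Delta D \<and> eps_expansion Y Yc"
  hence v: "valid q \<mu> (f, D, Yc, x)" unfolding valid_def by blast
  have a: "real q * D 1 x = - (\<Sum>k<q. f (x + real k * \<mu>))"
    using valid_facts(3)[OF v, of 1] by (simp add: Ac_def GC0)
  have b: "real q * Yc 1 x = real q * (real q + 1) / 2 * D 1 x + (\<Sum>k<q. (real q - real k) * f (x + real k * \<mu>))"
    using valid_facts(4)[OF v, of 1] by (simp add: Ac_def Bc_def GC0)
  have q0: "real q > 0" using assms(1) by simp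
  show "D 1 x = - fbar q \<mu> f x"
    using a q0 unfolding fbar_def by (simp add: field_simps)
  show "Yc 1 x = - ((real q + 1) / 2) * fbar q \<mu> f x + fbarbar q \<mu> f x"
    using a b q0 unfolding fbar_def fbarbar_def by (simp add: field_simps)
qed


end
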